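(* Let $\mathcal{G}_1,\dots,\mathcal{G}_m$ be signed digraphs on $\{1,\dots,n\}$ with signed Laplacians $L_1,\dots,L_m$. If for every $k\in\{1,\dots,m\}$ the matrix $-L_k$ is EEP and normal, then $\mathbb{L}=\{L_1,\dots,L_m\}$ is a consensus set for the switched system $\dot{\mathbf{x}}=-L_{\sigma(t)}\mathbf{x}$.
   Context: For a signed digraph with real weighted adjacency matrix $A$ (entries of any sign), the signed Laplacian is $L=\Sigma-A$, $\Sigma=\mathrm{diag}(\sigma_i)$, $\sigma_i=\sum_jA_{ij}$, so $L\mathbf{1}=0$. $M$ is EEP if there is $t_0\ge0$ with $e^{Mt}$ entrywise positive for all real $t\ge t_0$; $M$ is normal if $MM^\top=M^\top M$. A switching signal is a piecewise constant map $\sigma:[0,\infty)\to\{1,\dots,m\}$ with finitely many discontinuities on every bounded interval. $\mathbb{L}$ is a consensus set if for every switching signal and every $\mathbf{x}(0)\in\mathbb{R}^n$ there is $\alpha\in\mathbb{R}$ with $\lim_{t\to\infty}\mathbf{x}(t)=\alpha\mathbf{1}$. *)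

theory Defs
  imports "HOL-Analysis.Analysis"
begin

text \<open>Vertices {1..n} are modelled by a finite index type 'n with CARD('n) = n;
  n x n real matrices are real^'n^'n with matrix product **.\<close>

definition matpow :: "real^'n^'n \<Rightarrow> nat \<Rightarrow> real^'n^'n" where
  "matpow M k = ((\<lambda>X. M ** X) ^^ k) (mat 1)"

definition mexp :: "real^'n^'n \<Rightarrow> real^'n^'n" where
  "mexp M = (\<Sum>k. (1 / fact k) *\<^sub>R matpow M k)"

definition signed_laplacian :: "real^'n^'n \<Rightarrow> real^'n^'n" where
  "signed_laplacian A = (\<chi> i j. (if i = j then (\<Sum>k\<in>UNIV. A $ i $ k) else 0) - A $ i $ j)"

definition EEP :: "real^'n^'n \<Rightarrow> bool" where
  "EEP M \<longleftrightarrow> (\<exists>t0\<ge>0. \<forall>t\<ge>t0. \<forall>i j. mexp (t *\<^sub>R M) $ i $ j > 0)"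

definition normal_matrix :: "real^'n^'n \<Rightarrow> bool" where
  "normal_matrix M \<longleftrightarrow> M ** transpose M = transpose M ** M"

definition locally_finite_set :: "real set \<Rightarrow> bool" where
  "locally_finite_set D \<longleftrightarrow> (\<forall>T. finite (D \<inter> {0..T}))"

definition switching_signal :: "nat \<Rightarrow> (real \<Rightarrow> nat) \<Rightarrow> bool" where
  "switching_signal m \<sigma> \<longleftrightarrow>
     (\<forall>t\<ge>0. \<sigma> t \<in> {1..m}) \<and>
     (\<exists>D. locally_finite_set D \<and>
        (\<forall>t\<ge>0. t \<notin> D \<longrightarrow> (\<exists>e>0. \<forall>s\<ge>0. \<bar>s - t\<bar> < e \<longrightarrow> \<sigma> s = \<sigma> t)))"

definition switched_solution ::
    "(nat \<Rightarrow> real^'n^'n) \<Rightarrow> (real \<Rightarrow> nat) \<Rightarrow> (real \<Rightarrow> real^'n) \<Rightarrow> bool" where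
  "switched_solution L \<sigma> x \<longleftrightarrow>
     continuous_on {0..} x \<and>
     (\<exists>S. locally_finite_set S \<and>
        (\<forall>t\<ge>0. t \<notin> S \<longrightarrow>
           (x has_vector_derivative (- (L (\<sigma> t) *v x t))) (at t within {0..})))"

definition consensus_set :: "nat \<Rightarrow> (nat \<Rightarrow> real^'n^'n) \<Rightarrow> bool" where
  "consensus_set m L \<longleftrightarrow>
     (\<forall>\<sigma> x. switching_signal m \<sigma> \<longrightarrow> switched_solution L \<sigma> x \<longrightarrow>
        (\<exists>\<alpha>::real. (x \<longlongrightarrow> (\<chi> i. \<alpha>)) at_top))"

end

theory Submission
  imports Defs
begin


typedef ('n::finite) sqm = "UNIV :: (real^'n^'n) set" morphisms mrep mabs by simp
setup_lifting type_definition_sqm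

lemma matrix_add_rdistrib': "((A::real^'n^'m) + B) ** C = A ** C + B ** C"
  by (simp add: matrix_matrix_mult_def vec_eq_iff sum.distrib algebra_simps)

instantiation sqm :: (finite) ring_1
begin
lift_definition zero_sqm :: "'a sqm" is "0" .
lift_definition one_sqm :: "'a sqm" is "mat 1" .
lift_definition plus_sqm :: "'a sqm \<Rightarrow> 'a sqm \<Rightarrow> 'a sqm" is "(+)" .
lift_definition minus_sqm :: "'a sqm \<Rightarrow> 'a sqm \<Rightarrow> 'a sqm" is "(-)" .
lift_definition uminus_sqm :: "'a sqm \<Rightarrow> 'a sqm" is "uminus" .
lift_definition times_sqm :: "'a sqm \<Rightarrow> 'a sqm \<Rightarrow> 'a sqm" is "(**)" .
instance
proof
  fix a b c :: "'a sqm"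
  show "a * b * c = a * (b * c)" by transfer (simp add: matrix_mul_assoc)
  show "1 * a = a" by transfer simp
  show "a * 1 = a" by transfer simp
  show "(a + b) * c = a * c + b * c" by transfer (simp add: matrix_add_rdistrib')
  show "a * (b + c) = a * b + a * c" by transfer (simp add: matrix_add_ldistrib)
  show "a + b + c = a + (b + c)" by transfer simp
  show "a + b = b + a" by transfer simp
  show "0 + a = a" by transfer simp
  show "- a + a = 0" by transfer simp
  show "a - b = a + - b" by transfer simp
  show "(0::'a sqm) \<noteq> 1"
  proof transfer
    obtain i :: 'a where True by simp
    have "(mat 1 :: real^'a^'a) $ i $ i = 1" by (simp add: mat_def)
    then show "(0::real^'a^'a) \<noteq> mat 1" by (metis zero_index zero_neq_one)
  qed
qed
end

instantiation sqm :: (finite) real_vector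
begin
lift_definition scaleR_sqm :: "real \<Rightarrow> 'a sqm \<Rightarrow> 'a sqm" is "scaleR" .
instance
  by standard (transfer; simp add: scaleR_add_right scaleR_add_left)+
end


instance sqm :: (finite) real_algebra_1
proof
  fix a :: real and x y :: "'a sqm"
  show "a *\<^sub>R x * y = a *\<^sub>R (x * y)"
    by transfer (simp add: matrix_matrix_mult_def vec_eq_iff sum_distrib_left algebra_simps)
  show "x * a *\<^sub>R y = a *\<^sub>R (x * y)"
    by transfer (simp add: matrix_matrix_mult_def vec_eq_iff sum_distrib_left algebra_simps)
qed

definition rownorm :: "real^'n^'n \<Rightarrow> real" where
  "rownorm A = Max (range (\<lambda>i. \<Sum>j\<in>UNIV. \<bar>A$i$j\<bar>))"

lemma row_le_rownorm: "(\<Sum>j\<in>UNIV. \<bar>A$i$j\<bar>) \<le> rownorm A"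
  unfolding rownorm_def by (rule Max_ge) auto

lemma rownorm_le: "(\<And>i. (\<Sum>j\<in>UNIV. \<bar>A$i$j\<bar>) \<le> c) \<Longrightarrow> rownorm A \<le> c"
  unfolding rownorm_def by (rule Max.boundedI) auto

lemma rownorm_attained: "\<exists>i. rownorm A = (\<Sum>j\<in>UNIV. \<bar>A$i$j\<bar>)"
proof -
  have "rownorm A \<in> range (\<lambda>i. \<Sum>j\<in>UNIV. \<bar>A$i$j\<bar>)"
    unfolding rownorm_def by (rule Max_in) auto
  then show ?thesis by auto
qed

lemma entry_le_rownorm: "\<bar>A$i$j\<bar> \<le> rownorm A"
proof -
  have "\<bar>A$i$j\<bar> \<le> (\<Sum>j\<in>UNIV. \<bar>A$i$j\<bar>)"
    by (rule member_le_sum) auto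
  then show ?thesis using row_le_rownorm[of A i] by linarith
qed

lemma rownorm_nonneg: "0 \<le> rownorm A"
  using entry_le_rownorm[of A] by (meson abs_ge_zero order_trans)

lemma rownorm_triangle: "rownorm (A + B) \<le> rownorm A + rownorm B"
proof (rule rownorm_le)
  fix i
  have "(\<Sum>j\<in>UNIV. \<bar>(A+B)$i$j\<bar>) \<le> (\<Sum>j\<in>UNIV. \<bar>A$i$j\<bar> + \<bar>B$i$j\<bar>)"
    by (rule sum_mono) simp
  also have "\<dots> = (\<Sum>j\<in>UNIV. \<bar>A$i$j\<bar>) + (\<Sum>j\<in>UNIV. \<bar>B$i$j\<bar>)" by (rule sum.distrib)
  also have "\<dots> \<le> rownorm A + rownorm B" using row_le_rownorm[of A i] row_le_rownorm[of B i] by linarith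
  finally show "(\<Sum>j\<in>UNIV. \<bar>(A+B)$i$j\<bar>) \<le> rownorm A + rownorm B" .
qed

lemma rownorm_scale: "rownorm (c *\<^sub>R A) = \<bar>c\<bar> * rownorm A"
proof (rule antisym)
  show "rownorm (c *\<^sub>R A) \<le> \<bar>c\<bar> * rownorm A"
  proof (rule rownorm_le)
    fix i
    have "(\<Sum>j\<in>UNIV. \<bar>(c *\<^sub>R A)$i$j\<bar>) = \<bar>c\<bar> * (\<Sum>j\<in>UNIV. \<bar>A$i$j\<bar>)"
      by (simp add: abs_mult sum_distrib_left)
    also have "\<dots> \<le> \<bar>c\<bar> * rownorm A" by (rule mult_left_mono[OF row_le_rownorm]) simp
    finally show "(\<Sum>j\<in>UNIV. \<bar>(c *\<^sub>R A)$i$j\<bar>) \<le> \<bar>c\<bar> * rownorm A" .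
  qed
  obtain i where i: "rownorm A = (\<Sum>j\<in>UNIV. \<bar>A$i$j\<bar>)" using rownorm_attained by blast
  have "\<bar>c\<bar> * rownorm A = (\<Sum>j\<in>UNIV. \<bar>(c *\<^sub>R A)$i$j\<bar>)"
    by (simp add: i abs_mult sum_distrib_left)
  also have "\<dots> \<le> rownorm (c *\<^sub>R A)" by (rule row_le_rownorm)
  finally show "\<bar>c\<bar> * rownorm A \<le> rownorm (c *\<^sub>R A)" .
qed

lemma rownorm_eq_0: "rownorm A = 0 \<longleftrightarrow> A = 0"
proof
  assume "rownorm A = 0"
  then have "\<And>i j. A$i$j = 0" using entry_le_rownorm[of A] by (metis abs_le_zero_iff)
  then show "A = 0" by (simp add: vec_eq_iff)
next
  assume "A = 0"
  then show "rownorm A = 0"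
    using rownorm_nonneg[of A] rownorm_le[of A 0] by simp
qed

lemma rownorm_mult: "rownorm (A ** B) \<le> rownorm A * rownorm B"
proof (rule rownorm_le)
  fix i
  have "(\<Sum>j\<in>UNIV. \<bar>(A ** B)$i$j\<bar>) \<le> (\<Sum>j\<in>UNIV. \<Sum>k\<in>UNIV. \<bar>A$i$k\<bar> * \<bar>B$k$j\<bar>)"
    unfolding matrix_matrix_mult_def
    by (rule sum_mono) (simp, rule order_trans[OF sum_abs], simp add: abs_mult)
  also have "\<dots> = (\<Sum>k\<in>UNIV. \<bar>A$i$k\<bar> * (\<Sum>j\<in>UNIV. \<bar>B$k$j\<bar>))"
    by (subst sum.swap) (simp add: sum_distrib_left)
  also have "\<dots> \<le> (\<Sum>k\<in>UNIV. \<bar>A$i$k\<bar> * rownorm B)"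
    by (rule sum_mono) (rule mult_left_mono[OF row_le_rownorm], simp)
  also have "\<dots> = (\<Sum>k\<in>UNIV. \<bar>A$i$k\<bar>) * rownorm B" by (simp add: sum_distrib_right)
  also have "\<dots> \<le> rownorm A * rownorm B"
    by (rule mult_right_mono[OF row_le_rownorm rownorm_nonneg])
  finally show "(\<Sum>j\<in>UNIV. \<bar>(A ** B)$i$j\<bar>) \<le> rownorm A * rownorm B" .
qed

lemma rownorm_one: "rownorm (mat 1 :: real^'n^'n) = 1"
proof -
  have r: "(\<Sum>j\<in>UNIV. \<bar>(mat 1 :: real^'n^'n)$i$j\<bar>) = 1" for i
    by (simp add: mat_def if_distrib sum.delta cong: if_cong)
  obtain i :: 'n where True by simp
  show ?thesis using rownorm_attained[of "mat 1 :: real^'n^'n"] r by metis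
qed

lemma norm_le_rownorm: "norm (A::real^'n^'n) \<le> of_nat CARD('n) * rownorm A"
proof -
  have "norm A \<le> (\<Sum>i\<in>UNIV. norm (A$i))"
    unfolding norm_vec_def by (rule L2_set_le_sum) simp
  also have "\<dots> \<le> (\<Sum>i\<in>(UNIV::'n set). rownorm A)"
  proof (rule sum_mono)
    fix i show "norm (A$i) \<le> rownorm A"
      using norm_le_l1_cart[of "A$i"] row_le_rownorm[of A i] by linarith
  qed
  finally show ?thesis by simp
qed

lemma rownorm_le_norm: "rownorm (A::real^'n^'n) \<le> of_nat CARD('n) * norm A"
proof (rule rownorm_le)
  fix i
  have "(\<Sum>j\<in>UNIV. \<bar>A$i$j\<bar>) \<le> (\<Sum>j\<in>(UNIV::'n set). norm A)"
    by (rule sum_mono) (rule order_trans[OF component_le_norm_cart Finite_Cartesian_Product.norm_nth_le])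
  then show "(\<Sum>j\<in>UNIV. \<bar>A$i$j\<bar>) \<le> of_nat CARD('n) * norm A" by simp
qed

instantiation sqm :: (finite) real_normed_algebra_1
begin
lift_definition norm_sqm :: "'a sqm \<Rightarrow> real" is rownorm .
definition dist_sqm :: "'a sqm \<Rightarrow> 'a sqm \<Rightarrow> real" where "dist_sqm a b = norm (a - b)"
definition sgn_sqm :: "'a sqm \<Rightarrow> 'a sqm" where "sgn_sqm x = scaleR (inverse (norm x)) x"
definition uniformity_sqm :: "('a sqm \<times> 'a sqm) filter" where
  "uniformity_sqm = (INF e\<in>{0 <..}. principal {(x, y). dist x y < e})"
definition open_sqm :: "'a sqm set \<Rightarrow> bool" where
  "open_sqm S = (\<forall>x\<in>S. \<forall>\<^sub>F (x', y) in uniformity. x' = x \<longrightarrow> y \<in> S)"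
instance
  apply standard
  unfolding dist_sqm_def open_sqm_def sgn_sqm_def uniformity_sqm_def
  apply (rule refl | (transfer, simp add: rownorm_triangle rownorm_scale rownorm_eq_0 rownorm_mult rownorm_one))+
  done
end

lemma bounded_linear_mrep: "bounded_linear (mrep :: 'n::finite sqm \<Rightarrow> real^'n^'n)"
proof
  fix x y :: "'n sqm" and r :: real
  show "mrep (x + y) = mrep x + mrep y" by transfer simp
  show "mrep (r *\<^sub>R x) = r *\<^sub>R mrep x" by transfer simp
  show "\<exists>K. \<forall>x::'n sqm. norm (mrep x) \<le> norm x * K"
    by (rule exI[of _ "of_nat CARD('n)"]) (metis norm_sqm.rep_eq norm_le_rownorm mult.commute)
qed

lemma bounded_linear_mabs: "bounded_linear (mabs :: real^'n^'n \<Rightarrow> 'n::finite sqm)"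
proof
  fix x y :: "real^'n^'n" and r :: real
  show "mabs (x + y) = mabs x + mabs y" by (simp add: plus_sqm.abs_eq)
  show "mabs (r *\<^sub>R x) = r *\<^sub>R mabs x" by (simp add: scaleR_sqm.abs_eq)
  show "\<exists>K. \<forall>x. norm (mabs x :: 'n sqm) \<le> norm x * K"
    by (rule exI[of _ "of_nat CARD('n)"]) (metis norm_sqm.abs_eq eq_onp_same_args rownorm_le_norm mult.commute)
qed

instance sqm :: (finite) banach
proof
  fix X :: "nat \<Rightarrow> 'a sqm"
  assume "Cauchy X"
  then have "Cauchy (\<lambda>n. mrep (X n))" by (rule bounded_linear.Cauchy[OF bounded_linear_mrep])
  then obtain L where "(\<lambda>n. mrep (X n)) \<longlonglongrightarrow> L" using Cauchy_convergent_iff convergent_def by blast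
  then have "(\<lambda>n. mabs (mrep (X n))) \<longlonglongrightarrow> mabs L" by (rule bounded_linear.tendsto[OF bounded_linear_mabs])
  then show "convergent X" by (auto simp: convergent_def mrep_inverse)
qed




lemma matpow_0: "matpow M 0 = mat 1" by (simp add: matpow_def)
lemma matpow_Suc: "matpow M (Suc k) = M ** matpow M k" by (simp add: matpow_def)

lemma mrep_power: "mrep (X ^ k) = matpow (mrep X) k"
  by (induction k) (simp_all add: matpow_0 matpow_Suc one_sqm.rep_eq times_sqm.rep_eq)

lemma mrep_mabs: "mrep (mabs M) = M" by (simp add: mabs_inverse)

lemma matpow_mrep: "matpow M k = mrep (mabs M ^ k)"
  by (simp add: mrep_power mrep_mabs)

lemma mexp_sums: "(\<lambda>k. (1 / fact k) *\<^sub>R matpow M k) sums mrep (exp (mabs M))"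
proof -
  have "(\<lambda>n. mrep (mabs M ^ n /\<^sub>R fact n)) sums mrep (exp (mabs M))"
    by (rule bounded_linear.sums[OF bounded_linear_mrep exp_converges])
  moreover have "mrep (mabs M ^ n /\<^sub>R fact n) = (1 / fact n) *\<^sub>R matpow M n" for n
    by (simp add: scaleR_sqm.rep_eq matpow_mrep divide_inverse)
  ultimately show ?thesis by simp
qed

lemma mexp_mrep: "mexp M = mrep (exp (mabs M))"
  unfolding mexp_def using mexp_sums sums_unique by metis

lemma mexp_sums': "(\<lambda>k. (1 / fact k) *\<^sub>R matpow M k) sums mexp M"
  using mexp_sums mexp_mrep by metis

lemma mexp_mult:
  assumes "A ** B = B ** A"
  shows "mexp A ** mexp B = mexp (A + B)"
proof -
  have c: "mabs A * mabs B = mabs B * mabs A"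
    using assms by (metis mrep_mabs times_sqm.rep_eq mrep_inject)
  have "mabs (A + B) = mabs A + mabs B"
    by (metis mrep_mabs plus_sqm.rep_eq mrep_inject)
  then show ?thesis
    by (simp add: mexp_mrep exp_add_commuting[OF c] times_sqm.rep_eq)
qed

lemma transpose_matpow: "transpose (matpow M k) = matpow (transpose M) k"
proof (induction k)
  case 0 then show ?case by (simp add: matpow_0)
next
  case (Suc k)
  have "matpow M (Suc k) = matpow M k ** M"
  proof -
    have "matpow M (Suc k) = mrep (mabs M ^ k * mabs M)"
      by (simp only: matpow_mrep power_Suc2)
    also have "\<dots> = matpow M k ** M" by (simp add: times_sqm.rep_eq matpow_mrep mrep_mabs)
    finally show ?thesis .
  qed
  then show ?case using Suc by (simp add: matrix_transpose_mul matpow_Suc)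
qed

lemma linear_transpose: "linear (transpose :: real^'n^'m \<Rightarrow> real^'m^'n)"
  by (rule linearI) (simp_all add: transpose_def vec_eq_iff)

lemma mexp_transpose: "transpose (mexp M) = mexp (transpose M)"
proof -
  have bl: "bounded_linear (transpose :: real^'n^'n \<Rightarrow> real^'n^'n)"
    using linear_transpose linear_conv_bounded_linear by blast
  have "(\<lambda>k. transpose ((1 / fact k) *\<^sub>R matpow M k)) sums transpose (mexp M)"
    by (rule bounded_linear.sums[OF bl mexp_sums'])
  then have "(\<lambda>k. (1 / fact k) *\<^sub>R matpow (transpose M) k) sums transpose (mexp M)"
    by (simp add: transpose_scalar transpose_matpow)
  then show ?thesis using mexp_sums' sums_unique2 by metis
qed

lemma matpow_eigen: "M *v v = c *\<^sub>R v \<Longrightarrow> matpow M k *v v = (c ^ k) *\<^sub>R v"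
  by (induction k) (simp_all add: matpow_0 matpow_Suc matrix_vector_mul_assoc[symmetric] matrix_vector_mult_scaleR)

lemma mexp_eigen:
  fixes M :: "real^'n^'n"
  assumes "M *v v = c *\<^sub>R v"
  shows "mexp M *v v = exp c *\<^sub>R v"
proof -
  have lin: "linear (\<lambda>A::real^'n^'n. A *v v)"
    by (rule linearI) (simp_all add: matrix_vector_mult_add_rdistrib scaleR_matrix_vector_assoc)
  have bl: "bounded_linear (\<lambda>A::real^'n^'n. A *v v)"
    using lin linear_conv_bounded_linear by blast
  have "(\<lambda>k. ((1 / fact k) *\<^sub>R matpow M k) *v v) sums (mexp M *v v)"
    by (rule bounded_linear.sums[OF bl mexp_sums'])
  moreover have "((1 / fact k) *\<^sub>R matpow M k) *v v = (c ^ k /\<^sub>R fact k) *\<^sub>R v" for k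
    using matpow_eigen[OF assms, of k] by (simp add: scaleR_matrix_vector_assoc[symmetric] divide_inverse mult.commute)
  moreover have "(\<lambda>k. (c ^ k /\<^sub>R fact k) *\<^sub>R v) sums (exp c *\<^sub>R v)"
    by (rule sums_scaleR_left[OF exp_converges])
  ultimately show ?thesis using sums_unique2 by (metis (no_types, lifting) sums_cong)
qed




lemma inner_transpose: "(A *v x) \<bullet> y = x \<bullet> (transpose A *v (y::real^'n))"
  by (metis transpose_matrix_vector dot_lmul_matrix inner_commute)

lemma inner_vec_sum: "(x::real^'n) \<bullet> y = (\<Sum>i\<in>UNIV. x$i * y$i)"
  by (simp add: inner_vec_def)

lemma contraction:
  fixes P :: "real^'n^'n" and y :: "real^'n"
  assumes pos: "\<And>i j. P$i$j > 0"
    and row: "P *v (\<chi> i. 1) = (\<chi> i. 1)" and col: "transpose P *v (\<chi> i. 1) = (\<chi> i. 1)"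
    and y1: "(\<chi> i. 1) \<bullet> y = 0" and y0: "y \<noteq> 0"
  shows "(P *v y) \<bullet> (P *v y) < y \<bullet> y"
proof -
  have r: "(\<Sum>j\<in>UNIV. P$i$j) = 1" for i
    using arg_cong[OF row, of "\<lambda>v. v$i"] by (simp add: matrix_vector_mult_def)
  have c: "(\<Sum>i\<in>UNIV. P$i$j) = 1" for j
    using arg_cong[OF col, of "\<lambda>v. v$j"] by (simp add: matrix_vector_mult_def transpose_def)
  have ysum: "(\<Sum>j\<in>UNIV. y$j) = 0" using y1 by (simp add: inner_vec_sum)
  define m where "m i = (P *v y)$i" for i
  have m: "m i = (\<Sum>j\<in>UNIV. P$i$j * y$j)" for i
    by (simp add: m_def matrix_vector_mult_def)
  have var: "(\<Sum>j\<in>UNIV. P$i$j * (y$j - m i)^2) = (\<Sum>j\<in>UNIV. P$i$j * (y$j)^2) - (m i)^2" for i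
  proof -
    have "(\<Sum>j\<in>UNIV. P$i$j * (y$j - m i)^2) =
        (\<Sum>j\<in>UNIV. P$i$j * (y$j)^2) - 2 * m i * (\<Sum>j\<in>UNIV. P$i$j * y$j) + (m i)^2 * (\<Sum>j\<in>UNIV. P$i$j)"
      by (simp add: power2_eq_square algebra_simps sum.distrib sum_subtractf sum_distrib_left sum_distrib_right)
    then show ?thesis by (simp add: r m[symmetric] power2_eq_square)
  qed
  have strict: "(m i)^2 < (\<Sum>j\<in>UNIV. P$i$j * (y$j)^2)" for i
  proof -
    have "\<exists>j. y$j \<noteq> m i"
    proof (rule ccontr)
      assume "\<not> (\<exists>j. y$j \<noteq> m i)"
      then have yc: "\<And>j. y$j = m i" by blast
      then have "of_nat CARD('n) * m i = 0" using ysum by simp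
      then have "m i = 0" by simp
      then have "y = 0" using yc by (simp add: vec_eq_iff)
      then show False using y0 by simp
    qed
    then obtain j where j: "y$j \<noteq> m i" by blast
    have "0 < P$i$j * (y$j - m i)^2" using pos[of i j] j by simp
    also have "\<dots> \<le> (\<Sum>j\<in>UNIV. P$i$j * (y$j - m i)^2)"
      by (rule member_le_sum) (auto intro: mult_nonneg_nonneg less_imp_le[OF pos])
    finally show ?thesis using var[of i] by linarith
  qed
  have "(P *v y) \<bullet> (P *v y) = (\<Sum>i\<in>UNIV. (m i)^2)"
    by (simp add: inner_vec_sum m_def power2_eq_square)
  also have "\<dots> < (\<Sum>i\<in>UNIV. \<Sum>j\<in>UNIV. P$i$j * (y$j)^2)"
    by (rule sum_strict_mono) (auto intro: strict)
  also have "\<dots> = (\<Sum>j\<in>UNIV. (\<Sum>i\<in>UNIV. P$i$j) * (y$j)^2)"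
    by (subst sum.swap) (simp add: sum_distrib_right)
  also have "\<dots> = y \<bullet> y" by (simp add: c inner_vec_sum power2_eq_square)
  finally show ?thesis .
qed




lemma quad_zero:
  fixes a b :: real
  assumes a: "a \<ge> 0" and h: "\<And>s. s > 0 \<Longrightarrow> a * s + b * s^2 \<le> 0"
  shows "a = 0"
proof (rule ccontr)
  assume "a \<noteq> 0"
  then have ap: "a > 0" using a by simp
  define s where "s = a / (2 * (\<bar>b\<bar> + 1))"
  have sp: "s > 0" using ap by (simp add: s_def)
  have "\<bar>b\<bar> * s \<le> a / 2"
  proof -
    have "\<bar>b\<bar> * s = a * (\<bar>b\<bar> / (2 * (\<bar>b\<bar> + 1)))" by (simp add: s_def)
    also have "\<bar>b\<bar> / (2 * (\<bar>b\<bar> + 1)) \<le> 1/2" by (simp add: field_simps)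
    then have "a * (\<bar>b\<bar> / (2 * (\<bar>b\<bar> + 1))) \<le> a * (1/2)" using ap by (intro mult_left_mono) auto
    finally show ?thesis by simp
  qed
  have b1: "b * s^2 \<ge> - \<bar>b\<bar> * s^2" by (rule mult_right_mono) auto
  have b2: "\<bar>b\<bar> * s^2 = (\<bar>b\<bar> * s) * s" by (simp add: power2_eq_square)
  have b3: "(\<bar>b\<bar> * s) * s \<le> (a/2) * s" using \<open>\<bar>b\<bar> * s \<le> a / 2\<close> sp by (simp add: mult_right_mono)
  have "a * s + b * s^2 \<ge> (a/2) * s" using b1 b2 b3 by linarith
  moreover have "(a/2) * s > 0" using ap sp by simp
  ultimately have "a * s + b * s^2 > 0" by linarith
  then show False using h[OF sp] by linarith
qed

lemma scaleR_mm: "(a *\<^sub>R (A::real^'n^'n)) ** (b *\<^sub>R B) = (a * b) *\<^sub>R (A ** B)"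
  by (simp add: matrix_matrix_mult_def vec_eq_iff sum_distrib_left algebra_simps)

lemma quad_neg:
  fixes M :: "real^'n^'n" and t :: real
  assumes M1: "M *v (\<chi> i. 1) = 0"
    and normal: "M ** transpose M = transpose M ** M"
    and pos: "\<And>i j. mexp (t *\<^sub>R M) $ i $ j > 0" and t: "t > 0"
  shows "\<exists>c>0. \<forall>y. (\<chi> i. 1) \<bullet> y = 0 \<longrightarrow> y \<bullet> (M *v y) \<le> - c * (y \<bullet> y)"
proof -
  define one :: "real^'n" where "one = (\<chi> i. 1)"
  note M1' = M1[folded one_def]
  have MT1: "transpose M *v one = 0"
  proof -
    have "(transpose M *v one) \<bullet> (transpose M *v one) = one \<bullet> (M *v (transpose M *v one))"
      using inner_transpose[of "transpose M" one "transpose M *v one"] by (simp only: transpose_transpose)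
    also have "\<dots> = one \<bullet> ((M ** transpose M) *v one)"
      by (simp only: matrix_vector_mul_assoc)
    also have "\<dots> = one \<bullet> ((transpose M ** M) *v one)"
      by (simp only: normal)
    also have "\<dots> = one \<bullet> (transpose M *v (M *v one))"
      by (simp only: matrix_vector_mul_assoc)
    also have "\<dots> = 0" by (simp add: M1')
    finally show ?thesis by simp
  qed
  define S where "S = M + transpose M"
  have S1: "S *v one = 0" using MT1 by (simp add: S_def matrix_vector_mult_add_rdistrib M1')
  have ST: "transpose S = S" by (simp add: S_def transpose_def vec_eq_iff)
  define q where "q y = y \<bullet> (S *v y)" for y
  have qM: "y \<bullet> (M *v y) = q y / 2" for y
  proof -
    have "y \<bullet> (transpose M *v y) = y \<bullet> (M *v y)"
      by (metis inner_commute inner_transpose)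
    then show ?thesis by (simp add: q_def S_def matrix_vector_mult_add_rdistrib inner_add_right)
  qed
  have qscale: "q (c *\<^sub>R y) = c^2 * q y" for c y
    by (simp add: q_def matrix_vector_mult_scaleR power2_eq_square)
  define K where "K = {y. one \<bullet> y = 0} \<inter> sphere 0 1"
  show ?thesis
  proof (cases "K = {}")
    case True
    have "y \<bullet> (M *v y) \<le> - 1 * (y \<bullet> y)" if "one \<bullet> y = 0" for y
    proof (cases "y = 0")
      case False
      then have "y /\<^sub>R norm y \<in> K" using that by (simp add: K_def)
      then show ?thesis using True by simp
    qed simp
    then show ?thesis unfolding one_def by (intro exI[of _ 1]) auto
  next
    case False
    have "compact K" unfolding K_def Int_commute[of "{y. one \<bullet> y = 0}"]
      by (intro compact_Int_closed compact_sphere closed_hyperplane)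
    moreover have "continuous_on K q"
    proof -
      have "bounded_linear (\<lambda>y. S *v y)"
        using matrix_vector_mul_linear linear_conv_bounded_linear by blast
      then show ?thesis unfolding q_def
        by (intro continuous_on_inner continuous_on_id linear_continuous_on)
    qed
    ultimately obtain y0 where y0K: "y0 \<in> K" and ymax: "\<And>y. y \<in> K \<Longrightarrow> q y \<le> q y0"
      using continuous_attains_sup[of K q] False by blast
    define \<mu> where "\<mu> = q y0"
    have y01: "one \<bullet> y0 = 0" and y0n: "norm y0 = 1" using y0K by (auto simp: K_def)
    have y0y0: "y0 \<bullet> y0 = 1" using y0n by (simp add: dot_square_norm)
    have bound: "q y \<le> \<mu> * (y \<bullet> y)" if "one \<bullet> y = 0" for y
    proof (cases "y = 0")
      case True then show ?thesis by (simp add: q_def)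
    next
      case False
      have "y /\<^sub>R norm y \<in> K" using that False by (simp add: K_def)
      then have "q (y /\<^sub>R norm y) \<le> \<mu>" using ymax \<mu>_def by blast
      then have "q y / (norm y)^2 \<le> \<mu>" using qscale[of "inverse (norm y)" y]
        by (simp add: power_inverse divide_inverse mult.commute)
      then have "q y \<le> \<mu> * (norm y)^2" using False by (simp add: pos_divide_le_eq)
      then show ?thesis by (simp add: dot_square_norm)
    qed
    have eig: "S *v y0 = \<mu> *\<^sub>R y0"
    proof -
      define z where "z = S *v y0 - \<mu> *\<^sub>R y0"
      have z1: "one \<bullet> z = 0"
      proof -
        have "one \<bullet> (S *v y0) = 0"
          by (metis S1 ST inner_commute inner_transpose inner_zero_right)
        then show ?thesis by (simp add: z_def inner_diff_right y01)
      qed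
      have sym: "y0 \<bullet> (S *v z) = z \<bullet> (S *v y0)"
        by (metis ST inner_commute inner_transpose)
      have "2 * (z \<bullet> z) = 0"
      proof (rule quad_zero)
        show "0 \<le> 2 * (z \<bullet> z)" by simp
        fix s :: real assume "s > 0"
        have h: "one \<bullet> (y0 + s *\<^sub>R z) = 0" using y01 z1 by (simp add: inner_add_right)
        define A where "A = z \<bullet> (S *v y0)"
        define B where "B = z \<bullet> y0"
        define C where "C = z \<bullet> z"
        define D where "D = q z"
        have F1: "q (y0 + s *\<^sub>R z) = \<mu> + 2 * s * A + s^2 * D"
          using sym by (simp add: A_def D_def q_def \<mu>_def matrix_vector_right_distrib matrix_vector_mult_scaleR
              inner_add_left inner_add_right power2_eq_square algebra_simps)
        have F2: "(y0 + s *\<^sub>R z) \<bullet> (y0 + s *\<^sub>R z) = 1 + 2 * s * B + s^2 * C"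
          using y0y0 by (simp add: B_def C_def inner_add_left inner_add_right power2_eq_square algebra_simps inner_commute)
        have F3: "A - \<mu> * B = C"
          by (simp add: A_def B_def C_def z_def inner_diff_right inner_diff_left)
        have F4: "\<mu> + 2 * s * A + s^2 * D \<le> \<mu> * (1 + 2 * s * B + s^2 * C)"
          using bound[OF h] F1 F2 by simp
        have F5: "2 * C * s + (D - \<mu> * C) * s^2 = (\<mu> + 2 * s * A + s^2 * D) - \<mu> * (1 + 2 * s * B + s^2 * C)"
          unfolding F3[symmetric] by (simp add: algebra_simps)
        show "2 * (z \<bullet> z) * s + (q z - \<mu> * (z \<bullet> z)) * s^2 \<le> 0"
          using F4 F5 unfolding C_def[symmetric] D_def[symmetric] by linarith
      qed
      then show ?thesis by (simp add: z_def)
    qed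
    have \<mu>neg: "\<mu> < 0"
    proof -
      define P where "P = mexp (t *\<^sub>R M)"
      have P1: "P *v one = one"
        using mexp_eigen[of "t *\<^sub>R M" one 0] M1'
        by (simp add: P_def scaleR_matrix_vector_assoc[symmetric])
      have PT: "transpose P = mexp (t *\<^sub>R transpose M)"
        by (simp add: P_def mexp_transpose transpose_scalar)
      have PT1: "transpose P *v one = one"
        using mexp_eigen[of "t *\<^sub>R transpose M" one 0] MT1
        by (simp add: PT scaleR_matrix_vector_assoc[symmetric])
      have "y0 \<noteq> 0" using y0n by auto
      then have lt: "(P *v y0) \<bullet> (P *v y0) < 1"
        using contraction[of P y0] pos P1 PT1 y01 y0y0 unfolding P_def one_def by simp
      have comm: "(t *\<^sub>R transpose M) ** (t *\<^sub>R M) = (t *\<^sub>R M) ** (t *\<^sub>R transpose M)"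
        by (simp only: scaleR_mm normal)
      have "(P *v y0) \<bullet> (P *v y0) = y0 \<bullet> ((transpose P ** P) *v y0)"
        by (simp add: inner_transpose matrix_vector_mul_assoc)
      also have "transpose P ** P = mexp (t *\<^sub>R S)"
      proof -
        have "transpose P ** P = mexp (t *\<^sub>R transpose M + t *\<^sub>R M)"
          by (subst PT) (simp only: P_def mexp_mult[OF comm])
        also have "t *\<^sub>R transpose M + t *\<^sub>R M = t *\<^sub>R S"
          by (simp add: S_def scaleR_add_right add.commute)
        finally show ?thesis .
      qed
      also have "mexp (t *\<^sub>R S) *v y0 = exp (t * \<mu>) *\<^sub>R y0"
        by (rule mexp_eigen) (simp add: eig scaleR_matrix_vector_assoc[symmetric])
      finally have "exp (t * \<mu>) < 1" using lt y0y0 by simp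
      then have "t * \<mu> < 0" by simp
      then show ?thesis using t by (simp add: mult_less_0_iff)
    qed
    show ?thesis
    proof (intro exI[of _ "- \<mu> / 2"] conjI allI impI)
      show "0 < - \<mu> / 2" using \<mu>neg by simp
      fix y :: "real^'n" assume "(\<chi> i. 1) \<bullet> y = 0"
      then have "q y \<le> \<mu> * (y \<bullet> y)" using bound unfolding one_def by blast
      then show "y \<bullet> (M *v y) \<le> - (- \<mu> / 2) * (y \<bullet> y)" by (simp add: qM)
    qed
  qed
qed




lemma laplacian_one: "signed_laplacian A *v (\<chi> i. 1) = 0"
  by (simp add: signed_laplacian_def matrix_vector_mult_def vec_eq_iff sum_subtractf sum.delta sum.delta')

lemma uminus_mv: "(- A) *v v = - (A *v (v::real^'n))"
  by (simp add: matrix_vector_mult_def vec_eq_iff sum_negf)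

lemma normal_col:
  fixes M :: "real^'n^'n"
  assumes M1: "M *v one = 0" and normal: "M ** transpose M = transpose M ** M"
  shows "transpose M *v one = 0"
proof -
  have "(transpose M *v one) \<bullet> (transpose M *v one) = one \<bullet> (M *v (transpose M *v one))"
    using inner_transpose[of "transpose M" one "transpose M *v one"] by (simp only: transpose_transpose)
  also have "\<dots> = one \<bullet> ((M ** transpose M) *v one)"
    by (simp only: matrix_vector_mul_assoc)
  also have "\<dots> = one \<bullet> ((transpose M ** M) *v one)"
    by (simp only: normal)
  also have "\<dots> = one \<bullet> (transpose M *v (M *v one))"
    by (simp only: matrix_vector_mul_assoc)
  also have "\<dots> = 0" by (simp add: M1)
  finally show ?thesis by simp
qed

lemma vd_inner:
  assumes "(f has_vector_derivative f') (at t within s)" "(g has_vector_derivative g') (at t within s)"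
  shows "((\<lambda>t. f t \<bullet> g t) has_vector_derivative (f t \<bullet> g' + f' \<bullet> g t)) (at t within s)"
  by (rule bounded_bilinear.has_vector_derivative[OF bounded_bilinear_inner assms])

lemma per_k:
  fixes A :: "real^'n^'n"
  assumes "EEP (- signed_laplacian A)" "normal_matrix (- signed_laplacian A)"
  shows "\<exists>c>0. \<forall>y. (\<chi> i. 1) \<bullet> y = 0 \<longrightarrow> y \<bullet> ((- signed_laplacian A) *v y) \<le> - c * (y \<bullet> y)"
proof -
  obtain t0 where t0: "t0 \<ge> 0" "\<forall>t\<ge>t0. \<forall>i j. mexp (t *\<^sub>R (- signed_laplacian A)) $ i $ j > 0"
    using assms(1) unfolding EEP_def by blast
  show ?thesis
  proof (rule quad_neg[of _ "t0 + 1"])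
    show "(- signed_laplacian A) *v (\<chi> i. 1) = 0" by (simp add: uminus_mv laplacian_one)
    show "- signed_laplacian A ** transpose (- signed_laplacian A) =
      transpose (- signed_laplacian A) ** - signed_laplacian A"
      using assms(2) unfolding normal_matrix_def .
    show "\<And>i j. 0 < mexp ((t0 + 1) *\<^sub>R - signed_laplacian A) $ i $ j" using t0 by simp
    show "0 < t0 + 1" using t0 by simp
  qed
qed


theorem theorem7:
  fixes A :: "nat \<Rightarrow> real^'n^'n" and m :: nat
  assumes "\<forall>k\<in>{1..m}. EEP (- signed_laplacian (A k)) \<and> normal_matrix (- signed_laplacian (A k))"
  shows "consensus_set m (\<lambda>k. signed_laplacian (A k))"
  unfolding consensus_set_def
proof (intro allI impI)
  fix \<sigma> :: "real \<Rightarrow> nat" and x :: "real \<Rightarrow> real^'n"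
  assume sw: "switching_signal m \<sigma>" and sol: "switched_solution (\<lambda>k. signed_laplacian (A k)) \<sigma> x"
  define M where "M k = - signed_laplacian (A k)" for k
  define one :: "real^'n" where "one = (\<chi> i. 1)"
  have "\<forall>k\<in>{1..m}. \<exists>c>0. \<forall>y. one \<bullet> y = 0 \<longrightarrow> y \<bullet> (M k *v y) \<le> - c * (y \<bullet> y)"
    using assms per_k unfolding M_def one_def by blast
  then obtain c where c: "\<And>k. k \<in> {1..m} \<Longrightarrow> c k > 0"
    "\<And>k y. k \<in> {1..m} \<Longrightarrow> one \<bullet> y = 0 \<Longrightarrow> y \<bullet> (M k *v y) \<le> - c k * (y \<bullet> y)"
    by metis
  have sig: "\<And>t. t \<ge> 0 \<Longrightarrow> \<sigma> t \<in> {1..m}" using sw unfolding switching_signal_def by blast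
  then have m1: "{1..m} \<noteq> {}" by fastforce
  define \<gamma> where "\<gamma> = Min (c ` {1..m})"
  have \<gamma>pos: "\<gamma> > 0" unfolding \<gamma>_def using m1 c(1) by (subst Min_gr_iff) auto
  have \<gamma>le: "\<gamma> \<le> c k" if "k \<in> {1..m}" for k unfolding \<gamma>_def using that by (intro Min_le) auto
  have key: "y \<bullet> (M (\<sigma> t) *v y) \<le> - \<gamma> * (y \<bullet> y)" if "t \<ge> 0" "one \<bullet> y = 0" for t y
  proof -
    have "y \<bullet> (M (\<sigma> t) *v y) \<le> - c (\<sigma> t) * (y \<bullet> y)" using c(2) sig that by blast
    also have "\<dots> \<le> - \<gamma> * (y \<bullet> y)" using \<gamma>le[OF sig[OF that(1)]] by (simp add: mult_right_mono)
    finally show ?thesis .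
  qed
  have M1: "M k *v one = 0" for k by (simp add: M_def one_def uminus_mv laplacian_one)
  have MT1: "transpose (M k) *v one = 0" if "k \<in> {1..m}" for k
    by (rule normal_col[OF M1]) (use assms that in \<open>auto simp: M_def normal_matrix_def\<close>)
  obtain S where S: "locally_finite_set S"
    and xd: "\<And>t. t \<ge> 0 \<Longrightarrow> t \<notin> S \<Longrightarrow>
       (x has_vector_derivative (- (signed_laplacian (A (\<sigma> t)) *v x t))) (at t within {0..})"
    and xc: "continuous_on {0..} x"
    using sol unfolding switched_solution_def by blast
  have xd': "(x has_vector_derivative (M (\<sigma> t) *v x t)) (at t)" if "t > 0" "t \<notin> S" for t
  proof -
    have "(x has_vector_derivative (M (\<sigma> t) *v x t)) (at t within {0..})"
      using xd[of t] that by (simp add: M_def uminus_mv)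
    moreover have "at t within {0..} = at t" using that by (intro at_within_interior) simp
    ultimately show ?thesis by simp
  qed
  have finS: "finite (S \<inter> {0..T})" for T using S unfolding locally_finite_set_def by blast
  have cons: "one \<bullet> x T = one \<bullet> x 0" if "T \<ge> 0" for T
  proof -
    have "((\<lambda>_. 0::real) has_integral (one \<bullet> x T - one \<bullet> x 0)) {0..T}"
    proof (rule fundamental_theorem_of_calculus_interior_strong[OF finS[of T] that])
      fix t assume t: "t \<in> {0<..<T} - S \<inter> {0..T}"
      have "((\<lambda>t. one \<bullet> x t) has_vector_derivative (one \<bullet> (M (\<sigma> t) *v x t) + 0 \<bullet> x t)) (at t)"
        using vd_inner[OF has_vector_derivative_const xd'[of t]] t by auto
      moreover have "one \<bullet> (M (\<sigma> t) *v x t) = 0"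
        using MT1[OF sig[of t]] t by (metis inner_commute inner_transpose inner_zero_right less_imp_le greaterThanLessThan_iff DiffD1)
      ultimately show "((\<lambda>t. one \<bullet> x t) has_vector_derivative 0) (at t)" by simp
    next
      show "continuous_on {0..T} (\<lambda>t. one \<bullet> x t)"
        by (intro continuous_on_inner continuous_on_const continuous_on_subset[OF xc]) auto
    qed
    then show ?thesis using has_integral_0 has_integral_unique by fastforce
  qed
  define n where "n = real CARD('n)"
  have npos: "n > 0" by (simp add: n_def)
  define \<alpha> where "\<alpha> = (one \<bullet> x 0) / n"
  define a :: "real^'n" where "a = (\<chi> i. \<alpha>)"
  have a_one: "one \<bullet> a = one \<bullet> x 0"
    using npos by (simp add: a_def one_def \<alpha>_def inner_vec_def n_def)
  have Ma: "M k *v a = 0" for k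
  proof -
    have "a = \<alpha> *\<^sub>R one" by (simp add: a_def one_def vec_eq_iff)
    then show ?thesis by (simp add: matrix_vector_mult_scaleR M1)
  qed
  define V where "V t = (x t - a) \<bullet> (x t - a)" for t
  define W where "W t = exp (2 * \<gamma> * t) * V t" for t
  define W' where "W' t = exp (2 * \<gamma> * t) * (2 * \<gamma> * V t + 2 * ((x t - a) \<bullet> (M (\<sigma> t) *v (x t - a))))" for t
  have W'le: "W' t \<le> 0" if "t \<ge> 0" for t
  proof -
    have "one \<bullet> (x t - a) = 0" using cons[OF that] a_one by (simp add: inner_diff_right)
    then have "(x t - a) \<bullet> (M (\<sigma> t) *v (x t - a)) \<le> - \<gamma> * V t" using key[OF that] V_def by simp
    then have "2 * \<gamma> * V t + 2 * ((x t - a) \<bullet> (M (\<sigma> t) *v (x t - a))) \<le> 0" by simp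
    then show ?thesis unfolding W'_def by (simp add: mult_nonneg_nonpos)
  qed
  have Wdec: "W T \<le> W 0" if "T \<ge> 0" for T
  proof -
    have "(W' has_integral (W T - W 0)) {0..T}"
    proof (rule fundamental_theorem_of_calculus_interior_strong[OF finS[of T] that])
      fix t assume t: "t \<in> {0<..<T} - S \<inter> {0..T}"
      then have tp: "t > 0" "t \<notin> S" by auto
      have dy: "((\<lambda>t. x t - a) has_vector_derivative (M (\<sigma> t) *v x t)) (at t)"
        using has_vector_derivative_diff[OF xd'[OF tp] has_vector_derivative_const] by simp
      have Mx: "M (\<sigma> t) *v x t = M (\<sigma> t) *v (x t - a)"
        by (simp add: matrix_vector_right_distrib[symmetric] Ma matrix_vector_mult_diff_distrib)
      have dV: "(V has_vector_derivative (2 * ((x t - a) \<bullet> (M (\<sigma> t) *v (x t - a))))) (at t)"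
        using vd_inner[OF dy dy] unfolding V_def Mx by (simp add: inner_commute)
      have de: "((\<lambda>t. exp (2 * \<gamma> * t)) has_vector_derivative (exp (2 * \<gamma> * t) * (2 * \<gamma>))) (at t)"
        unfolding has_real_derivative_iff_has_vector_derivative[symmetric]
        by (auto intro!: derivative_eq_intros)
      have "(W has_vector_derivative (exp (2 * \<gamma> * t) * (2 * ((x t - a) \<bullet> (M (\<sigma> t) *v (x t - a))))
          + exp (2 * \<gamma> * t) * (2 * \<gamma>) * V t)) (at t)"
        unfolding W_def by (rule has_vector_derivative_mult[OF de dV])
      then show "(W has_vector_derivative W' t) (at t)"
        by (simp add: W'_def algebra_simps)
    next
      show "continuous_on {0..T} W" unfolding W_def V_def
        by (intro continuous_on_mult continuous_on_inner continuous_on_diff continuous_on_const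
            continuous_on_exp continuous_on_subset[OF xc] continuous_intros) auto
    qed
    moreover have "((\<lambda>_. 0::real) has_integral 0) {0..T}" by (rule has_integral_0)
    ultimately have "W T - W 0 \<le> 0" by (rule has_integral_le) (use W'le in auto)
    then show ?thesis by simp
  qed
  have bnd: "norm (x T - a) \<le> sqrt (V 0) * exp (- \<gamma> * T)" if "T \<ge> 0" for T
  proof -
    have "exp (2 * \<gamma> * T) * V T \<le> V 0" using Wdec[OF that] by (simp add: W_def)
    then have "V T \<le> V 0 * exp (- (2 * \<gamma> * T))"
      by (simp add: exp_minus field_simps)
    also have "exp (- (2 * \<gamma> * T)) = (exp (- \<gamma> * T))^2"
      by (simp add: exp_double[symmetric] power2_eq_square exp_add[symmetric])
    finally have "(norm (x T - a))^2 \<le> (sqrt (V 0) * exp (- \<gamma> * T))^2"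
      by (simp add: V_def dot_square_norm power_mult_distrib)
    then show ?thesis by (rule power2_le_imp_le) (simp add: V_def)
  qed
  have "((\<lambda>T. sqrt (V 0) * exp (- \<gamma> * T)) \<longlongrightarrow> 0) at_top"
  proof -
    have "((\<lambda>T. exp (- \<gamma> * T)) \<longlongrightarrow> 0) at_top"
    proof -
      have "filterlim (\<lambda>T. - \<gamma> * T) at_bot at_top"
      proof -
        have "filterlim (\<lambda>T. \<gamma> * T) at_top at_top"
          by (rule filterlim_tendsto_pos_mult_at_top[OF tendsto_const \<gamma>pos filterlim_ident])
        then show ?thesis unfolding filterlim_uminus_at_top by simp
      qed
      then show ?thesis by (rule filterlim_compose[OF exp_at_bot])
    qed
    then show ?thesis by (rule tendsto_mult_right_zero)
  qed
  then have "((\<lambda>T. x T - a) \<longlongrightarrow> 0) at_top"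
  proof (rule Lim_null_comparison[rotated])
    show "\<forall>\<^sub>F T in at_top. norm (x T - a) \<le> sqrt (V 0) * exp (- \<gamma> * T)"
      by (rule eventually_at_top_linorderI[of 0]) (rule bnd)
  qed
  then have "(x \<longlongrightarrow> a) at_top" by (rule LIM_zero_cancel)
  then show "\<exists>\<alpha>. (x \<longlongrightarrow> (\<chi> i. \<alpha>)) at_top" unfolding a_def by blast
qed


end
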